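(* Let $x$ be a real number with $x>1$ or $x<0$, and let $$F(s)=\frac{20x^2-56x+35}{(4s^2+x(x-1))^2}-\frac{4(x-1)(2x-3)(2x-1)^2}{(4s^2+x(x-1))^3}.$$ Then $$8x^2(1-x)\int_0^{1/4}\frac{sF(s)}{\sqrt{1-4s}}\,ds=3(x-1)R(x)+5x-6.$$
   Context: For real $x$ with $x>1$ or $x<0$, $R(x)=\sqrt x\,\operatorname{arctanh}\frac1{\sqrt x}$, i.e. $R(x)=\frac{\sqrt x}2\log\frac{\sqrt x+1}{\sqrt x-1}$ if $x>1$ and $R(x)=\sqrt{|x|}\arctan\frac1{\sqrt{|x|}}$ if $x<0$; equivalently, for $|x|>1$, $R(x)=\sum_{k\ge0}\frac{x^{-k}}{2k+1}$. *)

theory Defs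
  imports "HOL-Analysis.Analysis"
begin

text \<open>R(x) = sqrt x * artanh (1/sqrt x) for x > 1, and sqrt |x| * arctan (1/sqrt |x|) for x < 0.
  Outside these ranges R is not used (value 0 by convention).\<close>
definition R :: "real \<Rightarrow> real" where
  "R x = (if x > 1 then sqrt x / 2 * ln ((sqrt x + 1) / (sqrt x - 1))
          else if x < 0 then sqrt \<bar>x\<bar> * arctan (1 / sqrt \<bar>x\<bar>)
          else 0)"

definition F :: "real \<Rightarrow> real \<Rightarrow> real" where
  "F x s = (20 * x^2 - 56 * x + 35) / (4 * s^2 + x * (x - 1))^2
           - 4 * (x - 1) * (2 * x - 3) * (2 * x - 1)^2 / (4 * s^2 + x * (x - 1))^3"

end

theory Submission
  imports Defs
begin

definition Tf :: "real \<Rightarrow> real \<Rightarrow> real" where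
  "Tf x v = (if x > 1 then ln ((sqrt x + v) / (sqrt x - v)) / (2 * sqrt x)
             else - arctan (v / sqrt (-x)) / sqrt (-x))"

definition Pp :: "real \<Rightarrow> real \<Rightarrow> real" where
  "Pp x s = (5*x-6)*(x-1)/8 + ((8*x-9)*(x-1)/4)* s + (s^2)/2 + (3* s^3)/x"

definition Qq :: "real \<Rightarrow> real \<Rightarrow> real" where
  "Qq x s = 4* s^2 + x*(x-1)"

definition vv :: "real \<Rightarrow> real \<Rightarrow> real" where
  "vv x s = x * sqrt (1 - 4* s) / (x - 2* s)"

definition G :: "real \<Rightarrow> real \<Rightarrow> real" where
  "G x s = sqrt (1 - 4* s) * Pp x s / (Qq x s)^2 + 3 / (8*x) * Tf x (vv x s)"

lemma aux_ln:
  fixes a v :: real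
  assumes "a > 0" "a - v > 0" "a + v > 0"
  shows "(1 / ((a + v) / (a - v)) * ((1 * (a - v) - (a + v) * (0 - 1)) / (a - v)^2)) / (2 * a) = 1 / (a^2 - v^2)"
proof -
  have e1: "a^2 - v^2 = (a+v)*(a-v)" by (simp add: power2_eq_square algebra_simps)
  have e2: "(1 * (a - v) - (a + v) * (0 - 1)) = 2 * a" by simp
  have "(1 / ((a + v) / (a - v)) * ((1 * (a - v) - (a + v) * (0 - 1)) / (a - v)^2)) / (2 * a)
      = ((a - v) / (a + v)) * (2 * a / (a - v)^2) / (2 * a)" using assms by (simp add: e2)
  also have "\<dots> = 1 / ((a+v)*(a-v))" using assms by (simp add: power2_eq_square divide_simps)
  finally show ?thesis using e1 by simp
qed

lemma Tf_deriv:
  assumes x: "x > 1 \<or> x < 0" and v: "0 \<le> v" "v \<le> 1"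
  shows "(Tf x has_real_derivative 1 / (x - v^2)) (at v)"
proof (cases "x > 1")
  case True
  have sx: "sqrt x > 1" using True by simp
  have sq: "sqrt x ^ 2 = x" using True by simp
  have eq: "Tf x = (\<lambda>v. ln ((sqrt x + v) / (sqrt x - v)) / (2 * sqrt x))"
    using True by (auto simp: Tf_def fun_eq_iff)
  have p1: "sqrt x - v > 0" "sqrt x + v > 0" using sx v by linarith+
  show ?thesis unfolding eq
  proof (rule DERIV_cong)
    have d1: "((\<lambda>v. (sqrt x + v) / (sqrt x - v)) has_real_derivative
        ((1 * (sqrt x - v) - (sqrt x + v) * (0 - 1)) / (sqrt x - v)^2)) (at v)"
      by (rule DERIV_divide[THEN DERIV_cong], (rule derivative_eq_intros refl)+, use p1 in \<open>auto simp: power2_eq_square\<close>)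
    have d2: "((\<lambda>v. ln ((sqrt x + v) / (sqrt x - v))) has_real_derivative
        (1 / ((sqrt x + v) / (sqrt x - v)) * ((1 * (sqrt x - v) - (sqrt x + v) * (0 - 1)) / (sqrt x - v)^2))) (at v)"
      by (rule DERIV_chain2[OF DERIV_ln_divide d1]) (use p1 in simp)
    show "((\<lambda>v. ln ((sqrt x + v) / (sqrt x - v)) / (2 * sqrt x)) has_real_derivative
      (1 / ((sqrt x + v) / (sqrt x - v)) * ((1 * (sqrt x - v) - (sqrt x + v) * (0 - 1)) / (sqrt x - v)^2)) / (2 * sqrt x)) (at v)"
      by (rule DERIV_cdivide[OF d2])
    show "(1 / ((sqrt x + v) / (sqrt x - v)) * ((1 * (sqrt x - v) - (sqrt x + v) * (0 - 1)) / (sqrt x - v)^2)) / (2 * sqrt x) = 1 / (x - v^2)"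
      using aux_ln[of "sqrt x" v] p1 sx sq by simp
  qed
next
  case False
  then have xn: "x < 0" using x by auto
  have sx: "sqrt (-x) > 0" using xn by simp
  have sq: "sqrt (-x) ^ 2 = -x" using xn by simp
  have eq: "Tf x = (\<lambda>v. - arctan (v / sqrt (-x)) / sqrt (-x))"
    using False by (auto simp: Tf_def fun_eq_iff)
  have ne: "x - v^2 \<noteq> 0" using xn by (smt (verit) zero_le_power2)
  show ?thesis unfolding eq
  proof (rule DERIV_cong)
    show "((\<lambda>v. - arctan (v / sqrt (-x)) / sqrt (-x)) has_real_derivative
      (- (inverse (1 + (v / sqrt (-x))^2) * (1 / sqrt (-x))) / sqrt (-x))) (at v)"
    proof -
      have d1: "((\<lambda>v. v / sqrt(-x)) has_real_derivative 1 / sqrt(-x)) (at v)"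
        using DERIV_cdivide[OF DERIV_ident] .
      note d2 = DERIV_cdivide[OF DERIV_minus[OF DERIV_chain2[OF DERIV_arctan d1]], of "sqrt (-x)"]
      show ?thesis using d2 by simp
    qed
    show "- (inverse (1 + (v / sqrt (-x))^2) * (1 / sqrt (-x))) / sqrt (-x) = 1 / (x - v^2)"
      using sx sq ne xn by (simp add: field_simps power2_eq_square)
  qed
qed

lemma poly_id:
  fixes x s :: real
  assumes "x \<noteq> 0"
  shows "-2*Pp x s*Qq x s + (1-4* s)*(((8*x-9)*(x-1)/4 + s + 9* s^2/x)*Qq x s - 16* s*Pp x s)
      + (3/(4*x))*(1-x-2* s)*(Qq x s)^2
   = s*((20 * x^2 - 56 * x + 35)*Qq x s - 4 * (x - 1) * (2 * x - 3) * (2 * x - 1)^2)"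
  using assms unfolding Pp_def Qq_def by (simp add: field_simps) algebra

lemma alg_id:
  fixes x s u Q P Pd :: real
  assumes u: "u > 0" "u^2 = 1 - 4* s" and Q: "Q = Qq x s" "Q > 0"
    and x0: "x \<noteq> 0" and x2: "x - 2* s \<noteq> 0"
    and P: "P = Pp x s" and Pd: "Pd = (8*x-9)*(x-1)/4 + s + 9* s^2/x"
  shows "((-2/u) * P + Pd * u) * Q^2 / (Q^2 * Q^2) - u * P * (of_nat 2 * (8* s * Q^(2 - Suc 0))) / (Q^2 * Q^2)
      + 3/(8*x) * (1 / (x - (x * u / (x - 2* s))^2) *
          ((x * (-2/u) * (x - 2* s) - x * u * (-2)) / ((x - 2* s) * (x - 2* s))))
    = s * F x s / u"
proof -
  have Qd: "Q = 4* s^2 + x*(x-1)" using Q by (simp add: Qq_def)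
  have e1: "((-2/u) * P + Pd * u) * Q^2 / (Q^2 * Q^2) - u * P * (of_nat 2 * (8* s * Q^(2 - Suc 0))) / (Q^2 * Q^2)
      = (-2*P*Q + u^2*(Pd*Q - 16* s*P)) / (u * Q^3)"
    using u Q by (simp add: field_simps power2_eq_square power3_eq_cube)
  have e2: "(x * (-2/u) * (x - 2* s) - x * u * (-2)) / ((x - 2* s) * (x - 2* s))
      = 2*x*(u^2 - (x - 2* s)) / (u * (x-2* s)^2)"
    using u x2 by (simp add: field_simps power2_eq_square)
  have e3: "x - (x * u / (x - 2* s))^2 = x * Q / (x-2* s)^2"
  proof -
    have b0: "(x-2* s)^2 \<noteq> 0" using x2 by simp
    have "(x * u / (x - 2* s))^2 = x^2 * u^2 / (x-2* s)^2"
      by (simp add: power_divide power_mult_distrib)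
    then have "x - (x * u / (x - 2* s))^2 = (x * (x-2* s)^2 - x^2 * u^2) / (x-2* s)^2"
      using diff_divide_eq_iff[OF b0] by simp
    also have "x * (x-2* s)^2 - x^2 * u^2 = x * Q"
      unfolding u(2) Qd by (simp add: power2_eq_square algebra_simps)
    finally show ?thesis .
  qed
  have e4: "1 / (x - (x * u / (x - 2* s))^2) * (2*x*(u^2 - (x - 2* s)) / (u * (x-2* s)^2))
      = 2*(1-x-2* s) / (u*Q)"
  proof -
    have g: "\<And>b c :: real. b \<noteq> 0 \<Longrightarrow> 1 / (x*Q/b) * (2*x*c/(u*b)) = 2*c/(u*Q)"
      using u Q x0 by (simp add: field_simps)
    have "1 - 4 * s - (x - 2 * s) = 1-x-2* s" by simp
    then show ?thesis unfolding e3 u(2) using g[of "(x-2* s)^2" "1-x-2* s"] x2 by simp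
  qed
  have e5: "s * F x s / u = s*((20 * x^2 - 56 * x + 35)*Q - 4 * (x - 1) * (2 * x - 3) * (2 * x - 1)^2) / (u * Q^3)"
    unfolding F_def using u Q Qd by (simp add: field_simps power2_eq_square power3_eq_cube)
  note pid = poly_id[OF x0, of s]
  have "?thesis \<longleftrightarrow> (-2*P*Q + u^2*(Pd*Q - 16* s*P)) / (u * Q^3) + 3/(8*x) * (2*(1-x-2* s) / (u*Q))
     = s*((20 * x^2 - 56 * x + 35)*Q - 4 * (x - 1) * (2 * x - 3) * (2 * x - 1)^2) / (u * Q^3)"
    by (simp only: e1 e2 e4 e5)
  moreover have "(-2*P*Q + u^2*(Pd*Q - 16* s*P)) / (u * Q^3) + 3/(8*x) * (2*(1-x-2* s) / (u*Q))
     = (-2*P*Q + (1-4* s)*(Pd*Q - 16* s*P) + (3/(4*x))*(1-x-2* s)*Q^2) / (u * Q^3)"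
    unfolding u(2) using u Q x0 by (simp add: field_simps power2_eq_square power3_eq_cube)
  moreover have "-2*P*Q + (1-4* s)*(Pd*Q - 16* s*P) + (3/(4*x))*(1-x-2* s)*Q^2
     = s*((20 * x^2 - 56 * x + 35)*Q - 4 * (x - 1) * (2 * x - 3) * (2 * x - 1)^2)"
    using pid unfolding P Pd Q(1) .
  ultimately show ?thesis by simp
qed

lemma basic:
  assumes x: "x > 1 \<or> x < 0"
  shows "x * (x - 1) > 0" "x \<noteq> 0" "\<And>s. Qq x s > 0"
    "\<And>s. 0 \<le> s \<Longrightarrow> s \<le> 1/4 \<Longrightarrow> x - 2* s \<noteq> 0"
proof -
  show c: "x * (x - 1) > 0" using x by (auto simp: zero_less_mult_iff)
  show "x \<noteq> 0" using x by auto
  show "\<And>s. Qq x s > 0" unfolding Qq_def using c by (smt (verit) zero_le_power2)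
  show "\<And>s. 0 \<le> s \<Longrightarrow> s \<le> 1/4 \<Longrightarrow> x - 2* s \<noteq> 0" using x by auto
qed

lemma vv_bounds:
  assumes x: "x > 1 \<or> x < 0" and s: "0 \<le> s" "s \<le> 1/4"
  shows "0 \<le> vv x s" "vv x s \<le> 1"
proof -
  define u where "u = sqrt (1 - 4* s)"
  have u: "u \<ge> 0" "u^2 = 1 - 4* s" using s by (auto simp: u_def)
  have sq: "(\<bar>x\<bar> * u)^2 \<le> (\<bar>x - 2* s\<bar>)^2"
  proof -
    have "(\<bar>x\<bar> * u)^2 = x^2 * (1 - 4* s)" using u by (simp add: power_mult_distrib)
    moreover have "(\<bar>x - 2* s\<bar>)^2 = x^2 * (1 - 4* s) + 4* s*(x^2 - x + s)"
      by (simp add: power2_eq_square algebra_simps)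
    moreover have "4* s*(x^2 - x + s) \<ge> 0"
    proof -
      have "x^2 - x + s \<ge> 0" using s basic(1)[OF x] by (simp add: power2_eq_square algebra_simps)
      then show ?thesis using s by simp
    qed
    ultimately show ?thesis by simp
  qed
  have le: "\<bar>x\<bar> * u \<le> \<bar>x - 2* s\<bar>"
    using sq by (rule power2_le_imp_le) simp
  show "0 \<le> vv x s" "vv x s \<le> 1"
  proof (atomize (full), cases "x > 1")
    case True
    then have "x - 2* s > 0" using s by auto
    then show "0 \<le> vv x s \<and> vv x s \<le> 1" unfolding vv_def u_def[symmetric]
      using le True u by (auto simp: divide_simps)
  next
    case False
    then have xn: "x < 0" using x by auto
    then have "x - 2* s < 0" using s by auto
    then show "0 \<le> vv x s \<and> vv x s \<le> 1" unfolding vv_def u_def[symmetric]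
      using le xn u by (auto simp: divide_simps mult_nonpos_nonneg)
  qed
qed

lemma G_deriv:
  assumes x: "x > 1 \<or> x < 0" and s: "0 < s" "s < 1/4"
  shows "(G x has_real_derivative s * F x s / sqrt (1 - 4* s)) (at s)"
proof -
  define u where "u = sqrt (1 - 4* s)"
  have u: "u > 0" "u^2 = 1 - 4* s" using s by (auto simp: u_def)
  have x0: "x \<noteq> 0" and Qp: "Qq x s > 0" using basic[OF x] by auto
  have x2: "x - 2* s \<noteq> 0" using basic(4)[OF x, of s] s by auto
  have dlin: "((\<lambda>s. 1 - 4* s) has_real_derivative -4) (at s)"
    by (rule derivative_eq_intros refl)+ simp
  have du: "((\<lambda>s. sqrt (1 - 4* s)) has_real_derivative -2/u) (at s)"
    apply (rule DERIV_cong[OF DERIV_chain2[OF DERIV_real_sqrt dlin]])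
    using s apply simp
    using u by (simp add: u_def divide_simps)
  have dP: "((\<lambda>s. Pp x s) has_real_derivative (8*x-9)*(x-1)/4 + s + 9* s^2/x) (at s)"
  proof -
    have e: "(\<lambda>s. Pp x s) = (\<lambda>s. (5*x-6)*(x-1)/8 + ((8*x-9)*(x-1)/4) * s + (1/2) * s^2 + (3/x) * s^3)"
      by (auto simp: Pp_def fun_eq_iff)
    show ?thesis unfolding e
      apply (rule derivative_eq_intros refl)+
      using x0 by (simp add: field_simps power2_eq_square)
  qed
  have dQ: "((\<lambda>s. Qq x s) has_real_derivative 8* s) (at s)"
    unfolding Qq_def
    apply (rule derivative_eq_intros refl)+
    by (simp add: field_simps power2_eq_square)
  note d1 = DERIV_divide[OF DERIV_mult[OF du dP] DERIV_power[OF dQ, of 2]]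
  have dlin2: "((\<lambda>s. x - 2* s) has_real_derivative -2) (at s)"
    by (rule derivative_eq_intros refl)+ simp
  have dv: "((\<lambda>s. vv x s) has_real_derivative
      (x * (-2/u) * (x - 2* s) - x * u * (-2)) / ((x - 2* s) * (x - 2* s))) (at s)"
    unfolding vv_def
    apply (rule DERIV_cong[OF DERIV_divide[OF DERIV_cmult[OF du] dlin2]])
    using x2 by (auto simp: u_def)
  have vb: "0 \<le> vv x s" "vv x s \<le> 1" using vv_bounds[OF x] s by auto
  have vv': "vv x s = x * u / (x - 2* s)" by (simp add: vv_def u_def)
  note dT = DERIV_chain2[OF Tf_deriv[OF x vb] dv]
  note dG = DERIV_add[OF d1 DERIV_cmult[OF dT, of "3/(8*x)"]]
  show ?thesis
    unfolding G_def u_def[symmetric]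
    apply (rule DERIV_cong[OF dG[unfolded u_def[symmetric]]])
    using Qp apply simp
    using alg_id[OF u refl Qp x0 x2 refl refl] unfolding vv' by (simp add: mult.assoc diff_divide_distrib)
qed

lemma Tf_1:
  assumes x: "x > 1 \<or> x < 0"
  shows "Tf x 1 = R x / x"
proof (cases "x > 1")
  case True
  then have a: "sqrt x * sqrt x = x" "sqrt x > 0" by auto
  have "ln ((sqrt x + 1) / (sqrt x - 1)) / (2 * sqrt x) = sqrt x / 2 * ln ((sqrt x + 1) / (sqrt x - 1)) / x"
    apply (subst (3) a(1)[symmetric]) using a by (simp add: field_simps)
  then show ?thesis using True unfolding Tf_def R_def by simp
next
  case False
  then have xn: "x < 0" using x by auto
  then have a: "sqrt (-x) * sqrt (-x) = -x" "sqrt (-x) > 0" by auto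
  define t where "t = sqrt (-x)"
  have t: "x = - (t*t)" "t > 0" using a by (auto simp: t_def)
  have "- arctan (1 / sqrt (-x)) / sqrt (-x) = sqrt (-x) * arctan (1 / sqrt (-x)) / x"
    unfolding t_def[symmetric] unfolding t(1) using t(2) by (simp add: field_simps)
  then show ?thesis using False xn unfolding Tf_def R_def by simp
qed

lemma fin1:
  fixes x :: real
  assumes a: "x \<noteq> 0" "x - 1 \<noteq> 0"
  shows "8*x^2*(1-x) * ((5*x-6)*(x-1)/8 / (x*(x-1))^2) = -(5*x-6)"
proof -
  have D: "(x*(x-1))^2 \<noteq> 0" using a by simp
  have num: "x^2*(1-x) * ((5*x-6)*(x-1)) = -(5*x-6) * (x*(x-1))^2" by (simp add: power2_eq_square algebra_simps)
  have "8*x^2*(1-x) * ((5*x-6)*(x-1)/8 / (x*(x-1))^2) = (x^2*(1-x) * ((5*x-6)*(x-1))) / (x*(x-1))^2"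
    by simp
  also have "\<dots> = -(5*x-6)" unfolding num using D by simp
  finally show ?thesis .
qed

lemma fin2:
  fixes x r :: real
  assumes "x \<noteq> 0"
  shows "8*x^2*(1-x) * (3/(8*x)*(r/x)) = - (3*(x-1)*r)"
  using assms by (simp add: field_simps power2_eq_square)

lemma Tf_0: "Tf x 0 = 0"
  by (simp add: Tf_def)

lemma G_cont:
  assumes x: "x > 1 \<or> x < 0" and s: "0 \<le> s" "s \<le> 1/4"
  shows "isCont (G x) s"
proof -
  have Qp: "Qq x s > 0" and x2: "x - 2* s \<noteq> 0" using basic[OF x] s by auto
  have vb: "0 \<le> vv x s" "vv x s \<le> 1" using vv_bounds[OF x s] by auto
  have cT: "isCont (Tf x) (vv x s)" using DERIV_isCont[OF Tf_deriv[OF x vb]] .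
  have cv: "isCont (\<lambda>s. vv x s) s" unfolding vv_def using x2
    by (intro continuous_intros) auto
  have cP: "isCont (\<lambda>s. Pp x s) s" unfolding Pp_def using basic(2)[OF x] by (intro continuous_intros) auto
  have cQ: "isCont (\<lambda>s. Qq x s) s" unfolding Qq_def by (intro continuous_intros)
  have c1: "isCont (\<lambda>s. sqrt (1 - 4* s) * Pp x s / (Qq x s)^2) s"
    using Qp cP cQ by (intro continuous_intros) auto
  have c2: "isCont (\<lambda>s. 3 / (8*x) * Tf x (vv x s)) s"
    by (intro continuous_intros isCont_o2[OF cv cT])
  show ?thesis unfolding G_def using continuous_add[OF c1 c2] by simp
qed

theorem lemma5p2:
  fixes x :: real
  assumes "x > 1 \<or> x < 0"
  shows "(\<lambda>s. s * F x s / sqrt (1 - 4 * s)) integrable_on {0..1/4} \<and>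
         8 * x^2 * (1 - x) * integral {0..1/4} (\<lambda>s. s * F x s / sqrt (1 - 4 * s))
           = 3 * (x - 1) * R x + 5 * x - 6"
proof -
  note x = assms
  have hi: "((\<lambda>s. s * F x s / sqrt (1 - 4 * s)) has_integral G x (1/4) - G x 0) {0..1/4}"
  proof (rule fundamental_theorem_of_calculus_interior)
    show "0 \<le> (1/4::real)" by simp
    show "continuous_on {0..1/4} (G x)"
      by (rule continuous_at_imp_continuous_on) (use G_cont[OF x] in auto)
    fix s assume "s \<in> {0<..<(1/4::real)}"
    then show "(G x has_vector_derivative s * F x s / sqrt (1 - 4 * s)) (at s)"
      using G_deriv[OF x] by (simp add: has_real_derivative_iff_has_vector_derivative[symmetric])
  qed
  have g1: "G x (1/4) = 0" by (simp add: G_def vv_def Tf_0)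
  have v0: "vv x 0 = 1" using basic(2)[OF x] by (simp add: vv_def)
  have g0: "G x 0 = Pp x 0 / (Qq x 0)^2 + 3/(8*x) * (R x / x)"
    by (simp add: G_def v0 Tf_1[OF x])
  have c: "x * (x - 1) \<noteq> 0" "x \<noteq> 0" "x - 1 \<noteq> 0" using basic(1)[OF x] by auto
  have p0: "Pp x 0 = (5*x-6)*(x-1)/8" by (simp add: Pp_def)
  have q0: "Qq x 0 = x*(x-1)" by (simp add: Qq_def)
  have "8 * x^2 * (1 - x) * (G x (1/4) - G x 0)
     = - (8*x^2*(1-x) * ((5*x-6)*(x-1)/8 / (x*(x-1))^2)) - 8*x^2*(1-x) * (3/(8*x)*(R x/x))"
    unfolding g1 g0 p0 q0 by (simp add: algebra_simps)
  also have "\<dots> = 3 * (x - 1) * R x + 5 * x - 6"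
    unfolding fin1[OF c(2,3)] fin2[OF c(2)] by simp
  finally have "8 * x^2 * (1 - x) * (G x (1/4) - G x 0) = 3 * (x - 1) * R x + 5 * x - 6" .
  then show ?thesis using hi by (auto simp: integral_unique has_integral_integrable)
qed

end
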